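(* For $n\geq 0$ let \[ F_n=\sum_{T}\frac{(n+1)!}{2^n}\prod_{v\in T}\left(1+\frac{1}{h(v)}\right), \] the sum ranging over all binary trees $T$ with $n$ vertices (so $F_0=1$, the empty tree contributing an empty product). Then for every $n\geq 1$, \[ F_n=\frac{n+1}{2n}\sum_{k=0}^{n-1}\binom{n+1}{k+1}F_kF_{n-k-1}. \]
   Context: A binary tree is a rooted tree in which each vertex has a left subtree and a right subtree, each possibly empty; binary trees differing in whether a child is a left or a right child are distinct. For a vertex $v$ of a binary tree $T$, the hook length $h(v)$ is the number of descendants of $v$ in $T$, including $v$ itself. *)

theory Defs
  imports Complex_Main "HOL-Library.Tree"
begin

text \<open>Binary trees are unlabelled: unit tree (Leaf is the empty tree, Node l () r a vertex
with left subtree l and right subtree r).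
The hook length of the root of Node l x r is the size of that subtree.
hook_prod t is the product over all vertices v of t of (1 + 1/h(v)).\<close>

fun hook_prod :: "unit tree \<Rightarrow> real" where
  "hook_prod Leaf = 1"
| "hook_prod (Node l x r) =
     (1 + 1 / real (size (Node l x r))) * hook_prod l * hook_prod r"

definition binary_trees :: "nat \<Rightarrow> unit tree set" where
  "binary_trees n = {t. size t = n}"

definition F :: "nat \<Rightarrow> real" where
  "F n = (\<Sum>t\<in>binary_trees n. fact (n + 1) / 2 ^ n * hook_prod t)"

end

theory Submission
  imports Defs
begin

definition G :: "nat \<Rightarrow> real" where
  "G n = (\<Sum>t\<in>binary_trees n. hook_prod t)"

lemma F_G: "F n = fact (n + 1) / 2 ^ n * G n"
  unfolding F_def G_def by (simp add: sum_distrib_left)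

lemma bt0: "binary_trees 0 = {Leaf}"
  unfolding binary_trees_def by auto

lemma btSuc: "binary_trees (Suc m) =
  (\<Union>k\<in>{..m}. (\<lambda>(l,r). Node l () r) ` (binary_trees k \<times> binary_trees (m-k)))"
proof (rule set_eqI)
  fix t :: "unit tree"
  show "t \<in> binary_trees (Suc m) \<longleftrightarrow>
    t \<in> (\<Union>k\<in>{..m}. (\<lambda>(l,r). Node l () r) ` (binary_trees k \<times> binary_trees (m-k)))"
  proof (cases t)
    case Leaf then show ?thesis by (auto simp: binary_trees_def)
  next
    case (Node l x r)
    show ?thesis
    proof
      assume "t \<in> binary_trees (Suc m)"
      then have "size l \<le> m" "size r = m - size l" using Node by (auto simp: binary_trees_def)
      then show "t \<in> (\<Union>k\<in>{..m}. (\<lambda>(l,r). Node l () r) ` (binary_trees k \<times> binary_trees (m-k)))"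
        using Node by (auto simp: binary_trees_def intro!: bexI[of _ "size l"] image_eqI[of _ _ "(l,r)"])
    qed (auto simp: binary_trees_def)
  qed
qed

lemma bt_finite: "finite (binary_trees n)"
proof (induction n rule: less_induct)
  case (less n)
  show ?case
  proof (cases n)
    case 0 then show ?thesis by (simp add: bt0)
  next
    case (Suc m)
    then show ?thesis unfolding Suc btSuc using less Suc
      by (intro finite_UN_I finite_imageI finite_cartesian_product) auto
  qed
qed

lemma G_Suc: "G (Suc m) = (1 + 1 / real (Suc m)) * (\<Sum>k\<le>m. G k * G (m - k))"
proof -
  let ?f = "\<lambda>(l,r). Node l () r :: unit tree"
  have "G (Suc m) = (\<Sum>k\<le>m. \<Sum>t\<in>?f ` (binary_trees k \<times> binary_trees (m-k)). hook_prod t)"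
    unfolding G_def btSuc
    by (rule sum.UNION_disjoint) (auto simp: bt_finite intro!: finite_imageI, auto simp: binary_trees_def)
  also have "\<dots> = (\<Sum>k\<le>m. \<Sum>p\<in>binary_trees k \<times> binary_trees (m-k). hook_prod (?f p))"
    by (rule sum.cong[OF refl], rule sum.reindex_cong[OF _ refl refl]) (auto simp: inj_on_def)
  also have "\<dots> = (\<Sum>k\<le>m. (1 + 1 / real (Suc m)) * (G k * G (m - k)))"
  proof (rule sum.cong[OF refl])
    fix k assume k: "k \<in> {..m}"
    have "(\<Sum>p\<in>binary_trees k \<times> binary_trees (m-k). hook_prod (?f p))
      = (\<Sum>p\<in>binary_trees k \<times> binary_trees (m-k). (1 + 1 / real (Suc m)) * (hook_prod (fst p) * hook_prod (snd p)))"
      using k by (intro sum.cong refl) (auto simp: binary_trees_def)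
    also have "\<dots> = (1 + 1 / real (Suc m)) * (G k * G (m - k))"
    proof -
      have "G k * G (m - k) = (\<Sum>a\<in>binary_trees k. \<Sum>b\<in>binary_trees (m-k). hook_prod a * hook_prod b)"
        unfolding G_def by (rule sum_product)
      also have "\<dots> = (\<Sum>p\<in>binary_trees k \<times> binary_trees (m-k). hook_prod (fst p) * hook_prod (snd p))"
        by (subst sum.cartesian_product) (simp add: case_prod_beta)
      finally show ?thesis by (simp add: sum_distrib_left)
    qed
    finally show "(\<Sum>p\<in>binary_trees k \<times> binary_trees (m-k). hook_prod (?f p))
      = (1 + 1 / real (Suc m)) * (G k * G (m - k))" .
  qed
  finally show ?thesis by (simp add: sum_distrib_left)
qed

theorem mainTheorem2:
  fixes n :: nat
  assumes "n \<ge> 1"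
  shows "F n = real (n + 1) / real (2 * n) *
    (\<Sum>k = 0..n - 1. real ((n + 1) choose (k + 1)) * F k * F (n - k - 1))"
proof -
  obtain m where n: "n = Suc m" using assms by (cases n) auto
  have tm: "real ((n + 1) choose (k + 1)) * F k * F (n - k - 1)
     = fact (n+1) / 2 ^ m * (G k * G (m - k))" if "k \<le> m" for k
  proof -
    have c: "real ((n + 1) choose (k + 1)) = fact (n+1) / (fact (k+1) * fact (m - k + 1))"
    proof -
      have b: "real ((n + 1) choose (k + 1)) = fact (n+1) / (fact (k+1) * fact (n+1-(k+1)))"
        by (rule binomial_fact) (use that n in simp)
      have d: "n+1-(k+1) = m-k+1" using n that by simp
      show ?thesis using b unfolding d .
    qed
    have e: "n - k - 1 = m - k" "n - k = m - k + 1" using n that by auto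
    have p: "(2::real) ^ k * 2 ^ (m - k) = 2 ^ m"
      using that by (simp add: power_add[symmetric])
    have gen: "N / (a*b) * (a/x*g) * (b/y*h) = N/z*(g*h)"
      if "a \<noteq> 0" "b \<noteq> 0" "x*y = z" "x \<noteq> 0" "y \<noteq> 0" for N a b x y z g h :: real
      using that by (auto simp: field_simps)
    show ?thesis unfolding c e(1) F_G
      by (rule gen) (use p in auto)
  qed
  have "(\<Sum>k = 0..n - 1. real ((n + 1) choose (k + 1)) * F k * F (n - k - 1))
     = (\<Sum>k\<le>m. fact (n+1) / 2 ^ m * (G k * G (m - k)))"
    using n tm by (auto simp: atLeast0AtMost intro!: sum.cong)
  also have "\<dots> = fact (n+1) / 2 ^ m * (\<Sum>k\<le>m. G k * G (m - k))"
    by (simp add: sum_distrib_left)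
  finally have s: "(\<Sum>k = 0..n - 1. real ((n + 1) choose (k + 1)) * F k * F (n - k - 1))
     = fact (n+1) / 2 ^ m * (\<Sum>k\<le>m. G k * G (m - k))" .
  have "F n = fact (n+1) / 2 ^ n * ((1 + 1 / real n) * (\<Sum>k\<le>m. G k * G (m - k)))"
    unfolding F_G n G_Suc ..
  also have "\<dots> = real (n + 1) / real (2 * n) * (fact (n+1) / 2 ^ m * (\<Sum>k\<le>m. G k * G (m - k)))"
    using n by (simp add: field_simps)
  finally show ?thesis unfolding s .
qed

end
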